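(* Let $\underline A=(A_1,\dots,A_m)\in\mathcal C_k(d)$ with $\Theta_k(\underline A)>0$. For $1\le i\le m$ let $R_i:=\mathrm{Range}(A_i)$ and let $M_i$ be a real $d\times k$ matrix with $M_i^tM_i=I_k$ and $\mathrm{Range}(M_i)=R_i$. Define $C_{i,j}:=M_i^tA_iM_j$ for $1\le i,j\le m$. Then for all $1\le i,j\le m$: (1) $C_{i,j}\in\mathrm{GL}(k,\mathbb R)$; (2) $M_iC_{i,j}=A_iM_j$.
   Context: Fix integers $m,d\ge1$ and $1\le k\le d$. $\mathcal C_k(d)$ is the set of tuples $\underline A=(A_1,\dots,A_m)\in{\rm Mat}(d,\mathbb R)^m$ with $\mathrm{rank}(A_j)=k$ for all $j$. $\Theta_k(\underline A):=\min\{\|\wedge_k(A_aA_b)\|:1\le a,b\le m\}$, where $\wedge_kA$ is the $k$-th exterior power of a matrix $A$ (the matrix of its $k\times k$ minors); thus $\Theta_k(\underline A)>0$ means $\mathrm{rank}(A_aA_b)=k$ for all $a,b$. *)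

theory Defs
  imports "Jordan_Normal_Form.DL_Rank" "Jordan_Normal_Form.DL_Submatrix"
begin

definition rank_real :: "real mat \<Rightarrow> nat" where
  "rank_real A = vec_space.rank (dim_row A) A"

definition mat_range :: "real mat \<Rightarrow> real vec set" where
  "mat_range A = {A *\<^sub>v v | v. v \<in> carrier_vec (dim_col A)}"

(* k-element subsets of {0..<n}: index set of the k-th exterior power *)
definition k_subsets :: "nat \<Rightarrow> nat \<Rightarrow> nat set set" where
  "k_subsets n k = {I. I \<subseteq> {0..<n} \<and> card I = k}"

(* Frobenius norm of the k-th exterior power wedge_k A (matrix of k x k minors,
   rows/columns indexed by k-subsets in increasing order) *)
definition wedge_norm :: "nat \<Rightarrow> real mat \<Rightarrow> real" where
  "wedge_norm k A = sqrt (\<Sum>I\<in>k_subsets (dim_row A) k. \<Sum>J\<in>k_subsets (dim_col A) k.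
       (det (submatrix A I J))\<^sup>2)"

definition C_k :: "nat \<Rightarrow> nat \<Rightarrow> nat \<Rightarrow> (nat \<Rightarrow> real mat) \<Rightarrow> bool" where
  "C_k k d m A \<longleftrightarrow> (\<forall>j\<in>{1..m}. A j \<in> carrier_mat d d \<and> rank_real (A j) = k)"

definition Theta_k :: "nat \<Rightarrow> nat \<Rightarrow> (nat \<Rightarrow> real mat) \<Rightarrow> real" where
  "Theta_k k m A = Min {wedge_norm k (A a * A b) | a b. a \<in> {1..m} \<and> b \<in> {1..m}}"

end

theory Submission
  imports Defs
begin

lemma proj_lemma:
  fixes M N :: "real mat"
  assumes M: "M \<in> carrier_mat d k" and MM: "transpose_mat M * M = 1\<^sub>m k"
    and N: "N \<in> carrier_mat d n" and R: "mat_range N \<subseteq> mat_range M"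
  shows "M * (transpose_mat M * N) = N"
proof (rule mat_col_eqI)
  fix l assume l: "l < dim_col N"
  have cN: "col N l = N *\<^sub>v col (1\<^sub>m n) l"
    using col_mult2[OF N one_carrier_mat, of l] l N by simp
  have "col N l \<in> mat_range N" unfolding mat_range_def cN using N l
    by (intro CollectI exI[of _ "col (1\<^sub>m n) l"]) auto
  with R obtain w where w: "w \<in> carrier_vec k" and cw: "col N l = M *\<^sub>v w"
    unfolding mat_range_def using M by auto
  have "col (M * (transpose_mat M * N)) l = M *\<^sub>v (transpose_mat M *\<^sub>v col N l)"
  proof -
    have X: "transpose_mat M * N \<in> carrier_mat k n" using M N by auto
    show ?thesis using col_mult2[OF M X, of l] col_mult2[of "transpose_mat M" k d N n l] M N l by simp
  qed
  also have "\<dots> = M *\<^sub>v ((transpose_mat M * M) *\<^sub>v w)"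
    unfolding cw using M w by (subst assoc_mult_mat_vec[of _ k d _ k]) auto
  also have "\<dots> = col N l" unfolding MM cw using w by simp
  finally show "col (M * (transpose_mat M * N)) l = col N l" .
qed (use M N in auto)

lemma submatrix_mult:
  fixes A B :: "real mat"
  assumes A: "A \<in> carrier_mat n p" and B: "B \<in> carrier_mat p q"
  shows "submatrix (A * B) I J = submatrix A I UNIV * submatrix B UNIV J"
proof (rule eq_matI)
  show "dim_row (submatrix (A * B) I J) = dim_row (submatrix A I UNIV * submatrix B UNIV J)"
    using A B by (simp add: dim_submatrix)
  show "dim_col (submatrix (A * B) I J) = dim_col (submatrix A I UNIV * submatrix B UNIV J)"
    using A B by (simp add: dim_submatrix)
  fix i j assume i: "i < dim_row (submatrix A I UNIV * submatrix B UNIV J)"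
    and j: "j < dim_col (submatrix A I UNIV * submatrix B UNIV J)"
  have cp: "card {j. j < p \<and> j \<in> UNIV} = p" by simp
  from i have i': "i < card {i. i < n \<and> i \<in> I}" using A by (simp add: dim_submatrix)
  from j have j': "j < card {j. j < q \<and> j \<in> J}" using B by (simp add: dim_submatrix)
  have pi: "pick I i < n" using i' pick_le by fastforce
  have pj: "pick J j < q" using j' pick_le by fastforce
  have "submatrix (A * B) I J $$ (i, j) = (A * B) $$ (pick I i, pick J j)"
    using i' j' A B by (intro submatrix_index) auto
  also have "\<dots> = row A (pick I i) \<bullet> col B (pick J j)" using pi pj A B by simp
  also have "\<dots> = (\<Sum>l<p. A $$ (pick I i, l) * B $$ (l, pick J j))"
    using A B pi pj by (simp add: scalar_prod_def lessThan_atLeast0)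
  also have "\<dots> = row (submatrix A I UNIV) i \<bullet> col (submatrix B UNIV J) j"
    using A B i' j' by (simp add: scalar_prod_def dim_submatrix submatrix_index pick_UNIV lessThan_atLeast0)
  also have "\<dots> = (submatrix A I UNIV * submatrix B UNIV J) $$ (i, j)"
    using i j by simp
  finally show "submatrix (A * B) I J $$ (i, j) = (submatrix A I UNIV * submatrix B UNIV J) $$ (i, j)" .
qed

lemma submatrix_UNIV: "submatrix A UNIV UNIV = A"
  by (rule eq_matI) (auto simp: submatrix_def pick_UNIV)

lemma range_mult_sub:
  fixes A B :: "real mat"
  assumes A: "A \<in> carrier_mat d d" and B: "B \<in> carrier_mat d k"
  shows "mat_range (A * B) \<subseteq> mat_range A"
proof
  fix x assume "x \<in> mat_range (A * B)"
  then obtain v where v: "v \<in> carrier_vec k" and x: "x = (A * B) *\<^sub>v v"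
    unfolding mat_range_def using B by auto
  have "x = A *\<^sub>v (B *\<^sub>v v)" using x A B v by simp
  moreover have "B *\<^sub>v v \<in> carrier_vec (dim_col A)" using A B v by simp
  ultimately show "x \<in> mat_range A" unfolding mat_range_def by blast
qed

lemma det_zero_wedge:
  fixes P C X :: "real mat"
  assumes P: "P \<in> carrier_mat d k" and C: "C \<in> carrier_mat k k" and X: "X \<in> carrier_mat k d"
    and dC: "det C = 0"
  shows "wedge_norm k (P * C * X) = 0"
proof -
  have "det (submatrix (P * C * X) I J) = 0" if I: "I \<in> k_subsets d k" and J: "J \<in> k_subsets d k" for I J
  proof -
    have eI: "{i. i < d \<and> i \<in> I} = I" using I unfolding k_subsets_def by auto
    have eJ: "{i. i < d \<and> i \<in> J} = J" using J unfolding k_subsets_def by auto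
    have cI: "card {i. i < d \<and> i \<in> I} = k" using I unfolding eI k_subsets_def by simp
    have cJ: "card {i. i < d \<and> i \<in> J} = k" using J unfolding eJ k_subsets_def by simp
    have PC: "P * C \<in> carrier_mat d k" using P C by simp
    have e1: "submatrix (P * C * X) I J = submatrix (P * C) I UNIV * submatrix X UNIV J"
      by (rule submatrix_mult[OF PC X])
    have e2: "submatrix (P * C) I UNIV = submatrix P I UNIV * C"
      using submatrix_mult[OF P C, of I UNIV] by (simp only: submatrix_UNIV)
    have e: "submatrix (P * C * X) I J = submatrix P I UNIV * C * submatrix X UNIV J"
      unfolding e1 e2 ..
    have sP: "submatrix P I UNIV \<in> carrier_mat k k"
      using P cI unfolding carrier_mat_def by (simp add: dim_submatrix)
    have sX: "submatrix X UNIV J \<in> carrier_mat k k"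
      using X cJ unfolding carrier_mat_def by (simp add: dim_submatrix)
    show ?thesis unfolding e
      using det_mult[OF mult_carrier_mat[OF sP C] sX] det_mult[OF sP C] dC by simp
  qed
  moreover have "dim_row (P * C * X) = d" "dim_col (P * C * X) = d" using P X by auto
  ultimately show ?thesis unfolding wedge_norm_def by simp
qed

theorem lemma4p4:
  fixes m d k :: nat and A M :: "nat \<Rightarrow> real mat"
  assumes "1 \<le> m" and "1 \<le> d" and "1 \<le> k" and "k \<le> d"
    and "C_k k d m A"
    and "Theta_k k m A > 0"
    and "\<forall>i\<in>{1..m}. M i \<in> carrier_mat d k \<and> transpose_mat (M i) * M i = 1\<^sub>m k
                      \<and> mat_range (M i) = mat_range (A i)"
  shows "\<forall>i\<in>{1..m}. \<forall>j\<in>{1..m}.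
           transpose_mat (M i) * A i * M j \<in> carrier_mat k k
         \<and> invertible_mat (transpose_mat (M i) * A i * M j)
         \<and> M i * (transpose_mat (M i) * A i * M j) = A i * M j"
proof (intro ballI)
  fix i j assume i: "i \<in> {1..m}" and j: "j \<in> {1..m}"
  have Ai: "A i \<in> carrier_mat d d" and Aj: "A j \<in> carrier_mat d d"
    using assms(5) i j unfolding C_k_def by auto
  have Mi: "M i \<in> carrier_mat d k" and MMi: "transpose_mat (M i) * M i = 1\<^sub>m k"
    and Ri: "mat_range (M i) = mat_range (A i)" using assms(7) i by auto
  have Mj: "M j \<in> carrier_mat d k" and MMj: "transpose_mat (M j) * M j = 1\<^sub>m k"
    and Rj: "mat_range (M j) = mat_range (A j)" using assms(7) j by auto
  define C where "C = transpose_mat (M i) * A i * M j"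
  have Cc: "C \<in> carrier_mat k k" unfolding C_def using Mi Ai Mj by auto
  have Ceq: "C = transpose_mat (M i) * (A i * M j)" unfolding C_def using Mi Ai Mj by simp
  have P2: "M i * C = A i * M j" unfolding Ceq
    using proj_lemma[OF Mi MMi mult_carrier_mat[OF Ai Mj]] range_mult_sub[OF Ai Mj] Ri by auto
  have Ai': "M i * (transpose_mat (M i) * A i) = A i"
    using proj_lemma[OF Mi MMi Ai] Ri by auto
  have Aj': "M j * (transpose_mat (M j) * A j) = A j"
    using proj_lemma[OF Mj MMj Aj] Rj by auto
  have "det C \<noteq> 0"
  proof
    assume dC: "det C = 0"
    define X where "X = transpose_mat (M j) * A j"
    have Xc: "X \<in> carrier_mat k d" unfolding X_def using Mj Aj by auto
    have "A i * A j = (M i * (transpose_mat (M i) * A i)) * (M j * X)"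
      using Ai' Aj' unfolding X_def by simp
    also have "\<dots> = M i * C * X"
    proof -
      define Y where "Y = transpose_mat (M i) * A i"
      have Yc: "Y \<in> carrier_mat k d" unfolding Y_def using Mi Ai by auto
      have CY: "C = Y * M j" unfolding C_def Y_def ..
      have "M i * Y * (M j * X) = M i * (Y * (M j * X))"
        using assoc_mult_mat[OF Mi Yc mult_carrier_mat[OF Mj Xc]] .
      also have "Y * (M j * X) = Y * M j * X" using assoc_mult_mat[OF Yc Mj Xc] by simp
      also have "M i * (Y * M j * X) = M i * (Y * M j) * X"
        using assoc_mult_mat[OF Mi mult_carrier_mat[OF Yc Mj] Xc] by simp
      finally show ?thesis unfolding CY Y_def .
    qed
    finally have "wedge_norm k (A i * A j) = 0"
      using det_zero_wedge[OF Mi Cc Xc dC] by simp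
    moreover have "Theta_k k m A \<le> wedge_norm k (A i * A j)"
    proof -
      have eq: "{wedge_norm k (A a * A b) | a b. a \<in> {1..m} \<and> b \<in> {1..m}}
          = (\<lambda>(a,b). wedge_norm k (A a * A b)) ` ({1..m} \<times> {1..m})" by (auto, blast)
      show ?thesis unfolding Theta_k_def eq
        by (rule Min_le) (use i j in auto)
    qed
    ultimately show False using assms(6) by simp
  qed
  then have "C \<in> Units (ring_mat TYPE(real) k undefined)" by (rule det_non_zero_imp_unit[OF Cc])
  then obtain B where B: "B \<in> carrier_mat k k" "B * C = 1\<^sub>m k" "C * B = 1\<^sub>m k"
    unfolding Units_def ring_mat_def by auto
  have "invertible_mat C" unfolding invertible_mat_def inverts_mat_def
    using B Cc by (intro conjI exI[of _ B]) (auto simp: square_mat.simps)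
  then show "transpose_mat (M i) * A i * M j \<in> carrier_mat k k
         \<and> invertible_mat (transpose_mat (M i) * A i * M j)
         \<and> M i * (transpose_mat (M i) * A i * M j) = A i * M j"
    using Cc P2 unfolding C_def by blast
qed

end
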